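(* There exist an instance $(C,M)$ of 2-SBCM and a permutation $\pi^0$ of $C$ such that no solution with start permutation $\pi^0$ that has the minimum number of block crossings among all solutions with start permutation $\pi^0$ uses at most one block crossing before the first meeting and at most one block crossing between each pair of consecutive meetings (i.e., every such minimum solution has some $|B_i|\ge 2$).
   Context: A storyline instance is a pair $(C,M)$ where $C=\{1,\dots,k\}$ is a set of characters and $M=[m_1,\dots,m_n]$ is a sequence of meetings with $m_i\subseteq C$; in 2-SBCM every meeting has exactly two characters. A permutation of $C$ lists each character exactly once. For $1\le a\le b<c\le k$, the block crossing $(a,b,c)$ maps $\langle \pi_1,\dots,\pi_k\rangle$ to $\langle \pi_1,\dots,\pi_{a-1},\pi_{b+1},\dots,\pi_c,\pi_a,\dots,\pi_b,\pi_{c+1},\dots,\pi_k\rangle$. A meeting fits (is supported by) a permutation if its characters occupy consecutive positions. A solution is a start permutation $\pi^0$ and sequences $B_1,\dots,B_n$ of block crossings (possibly empty) such that, with $\pi^i$ obtained by applying $B_i$ in order to $\pi^{i-1}$, $\pi^i$ supports $m_i$ for all $i$; its cost is the total number of block crossings. *)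

theory Defs
  imports Main
begin

text \<open>Characters are C = {1..k}. A permutation of C is a list (positions 1..k,
  list index 0..k-1) listing each character exactly once.\<close>

definition is_perm :: "nat \<Rightarrow> nat list \<Rightarrow> bool" where
  "is_perm k p \<longleftrightarrow> distinct p \<and> set p = {1..k}"

definition is_2sbcm :: "nat \<Rightarrow> nat set list \<Rightarrow> bool" where
  "is_2sbcm k M \<longleftrightarrow> (\<forall>m\<in>set M. m \<subseteq> {1..k} \<and> card m = 2)"

type_synonym block_crossing = "nat \<times> nat \<times> nat"

definition valid_bc :: "nat \<Rightarrow> block_crossing \<Rightarrow> bool" where
  "valid_bc k bc = (case bc of (a, b, c) \<Rightarrow> 1 \<le> a \<and> a \<le> b \<and> b < c \<and> c \<le> k)"

text \<open>(a,b,c) maps <p1..pk> to <p1..p(a-1), p(b+1)..pc, pa..pb, p(c+1)..pk> (1-based).\<close>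
definition apply_bc :: "block_crossing \<Rightarrow> nat list \<Rightarrow> nat list" where
  "apply_bc bc p = (case bc of (a, b, c) \<Rightarrow>
     take (a - 1) p @ drop b (take c p) @ drop (a - 1) (take b p) @ drop c p)"

definition apply_bcs :: "block_crossing list \<Rightarrow> nat list \<Rightarrow> nat list" where
  "apply_bcs B p = fold apply_bc B p"

definition supports :: "nat list \<Rightarrow> nat set \<Rightarrow> bool" where
  "supports p m \<longleftrightarrow> (\<exists>i j. i \<le> j \<and> j \<le> length p \<and> set (drop i (take j p)) = m)"

text \<open>pi^i for i = 0..n: pi^i is obtained from pi^(i-1) by applying B_i (Bs ! (i-1)).\<close>
definition perm_after :: "nat list \<Rightarrow> block_crossing list list \<Rightarrow> nat \<Rightarrow> nat list" where
  "perm_after p0 Bs i = fold apply_bcs (take i Bs) p0"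

definition is_solution ::
  "nat \<Rightarrow> nat set list \<Rightarrow> nat list \<Rightarrow> block_crossing list list \<Rightarrow> bool" where
  "is_solution k M p0 Bs \<longleftrightarrow>
     is_perm k p0 \<and> length Bs = length M \<and>
     (\<forall>B\<in>set Bs. \<forall>bc\<in>set B. valid_bc k bc) \<and>
     (\<forall>i < length M. supports (perm_after p0 Bs (Suc i)) (M ! i))"

definition cost :: "block_crossing list list \<Rightarrow> nat" where
  "cost Bs = sum_list (map length Bs)"

end

theory Submission
  imports Defs
begin

fun adjl :: "nat list \<Rightarrow> nat \<Rightarrow> nat \<Rightarrow> bool" where
  "adjl (a # b # r) x y = ((a = x \<and> b = y) \<or> (a = y \<and> b = x) \<or> adjl (b # r) x y)"
| "adjl _ x y = False"

lemma adjl_iff: "adjl xs x y \<longleftrightarrow>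
  (\<exists>i. Suc i < length xs \<and> ((xs!i = x \<and> xs!Suc i = y) \<or> (xs!i = y \<and> xs!Suc i = x)))"
proof (induction xs x y rule: adjl.induct)
  case (1 a b r x y)
  show ?case
  proof
    assume "adjl (a # b # r) x y"
    then show "\<exists>i. Suc i < length (a # b # r) \<and> ((a # b # r) ! i = x \<and> (a # b # r) ! Suc i = y \<or> (a # b # r) ! i = y \<and> (a # b # r) ! Suc i = x)"
      using 1 by (auto intro: exI[of _ 0])
  next
    assume "\<exists>i. Suc i < length (a # b # r) \<and> ((a # b # r) ! i = x \<and> (a # b # r) ! Suc i = y \<or> (a # b # r) ! i = y \<and> (a # b # r) ! Suc i = x)"
    then obtain i where i: "Suc i < length (a # b # r)" "((a # b # r) ! i = x \<and> (a # b # r) ! Suc i = y \<or> (a # b # r) ! i = y \<and> (a # b # r) ! Suc i = x)" by blast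
    show "adjl (a # b # r) x y"
    proof (cases i)
      case 0 then show ?thesis using i by auto
    next
      case (Suc j)
      then have "adjl (b # r) x y" using 1 i by auto
      then show ?thesis by simp
    qed
  qed
next
  case ("2_1" x y) then show ?case by simp
next
  case ("2_2" v x y) then show ?case by simp
qed

lemma adjl_set: "set xs = {x, y} \<Longrightarrow> x \<noteq> y \<Longrightarrow> adjl xs x y"
proof (induction xs)
  case Nil then show ?case by simp
next
  case (Cons a r)
  show ?case
  proof (cases r)
    case Nil then show ?thesis using Cons by (metis doubleton_eq_iff list.set(1) list.set(2) insert_absorb2)
  next
    case (Cons b r')
    show ?thesis
    proof (cases "a = b")
      case True
      then have "set r = {x, y}" using Cons.prems \<open>r = b # r'\<close> by auto
      then show ?thesis using Cons.IH Cons.prems \<open>r = b # r'\<close> by simp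
    next
      case False
      have "a \<in> {x,y}" "b \<in> {x,y}" using Cons.prems \<open>r = b # r'\<close> by (auto simp flip: Cons.prems(1))
      then show ?thesis using False \<open>r = b # r'\<close> by auto
    qed
  qed
qed

lemma adjl_drop: "adjl (drop i xs) x y \<Longrightarrow> adjl xs x y"
proof -
  assume "adjl (drop i xs) x y"
  then obtain j where j: "Suc j < length (drop i xs)"
    "(drop i xs ! j = x \<and> drop i xs ! Suc j = y) \<or> (drop i xs ! j = y \<and> drop i xs ! Suc j = x)"
    unfolding adjl_iff by blast
  have l: "Suc (i + j) < length xs" using j(1) by simp
  have "drop i xs ! j = xs ! (i + j)" "drop i xs ! Suc j = xs ! Suc (i + j)"
    using j(1) by auto
  then show ?thesis unfolding adjl_iff using l j(2) by metis
qed

lemma adjl_take: "adjl (take i xs) x y \<Longrightarrow> adjl xs x y"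
proof -
  assume "adjl (take i xs) x y"
  then obtain j where j: "Suc j < length (take i xs)"
    "(take i xs ! j = x \<and> take i xs ! Suc j = y) \<or> (take i xs ! j = y \<and> take i xs ! Suc j = x)"
    unfolding adjl_iff by blast
  have l: "Suc j < length xs" using j(1) by simp
  have "take i xs ! j = xs ! j" "take i xs ! Suc j = xs ! Suc j"
    using j(1) by auto
  then show ?thesis unfolding adjl_iff using l j(2) by metis
qed

lemma supports_adjl: "supports p {x, y} \<Longrightarrow> x \<noteq> y \<Longrightarrow> adjl p x y"
  unfolding supports_def using adjl_set adjl_drop adjl_take by blast

definition allbcs :: "nat \<Rightarrow> block_crossing list" where
  "allbcs k = concat (map (\<lambda>a. concat (map (\<lambda>b. map (\<lambda>c. (a, b, c)) [Suc b..<Suc k]) [a..<Suc k])) [1..<Suc k])"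

lemma valid_allbcs: "valid_bc k bc \<Longrightarrow> bc \<in> set (allbcs k)"
  by (cases bc) (force simp: valid_bc_def allbcs_def simp del: upt_Suc)

definition p0s :: "nat list" where "p0s = [1,2,3,4,5,6,7]"

fun chkB :: "nat list \<Rightarrow> block_crossing list \<Rightarrow> bool" where
  "chkB x1 [] = True"
| "chkB x1 (bc # bs) = ((let x2 = apply_bc bc x1 in \<not> (adjl x2 3 7 \<and> adjl x2 4 6)) \<and> chkB x1 bs)"

fun chkA :: "block_crossing list \<Rightarrow> bool" where
  "chkA [] = True"
| "chkA (bc # bs) = ((let x1 = apply_bc bc p0s in adjl x1 1 3 \<longrightarrow> x1 \<in> set
     [[1, 3, 2, 4, 5, 6, 7], [1, 3, 4, 2, 5, 6, 7], [1, 3, 4, 5, 2, 6, 7], [1, 3, 4, 5, 6, 2, 7], [1, 3, 4, 5, 6, 7, 2], [2, 1, 3, 4, 5, 6, 7], [2, 3, 1, 4, 5, 6, 7], [3, 1, 2, 4, 5, 6, 7]]) \<and> chkA bs)"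

definition L7 :: "block_crossing list" where "L7 = [(1,1,2), (1,1,3), (1,1,4), (1,1,5), (1,1,6), (1,1,7), (1,2,3), (1,2,4), (1,2,5), (1,2,6), (1,2,7), (1,3,4), (1,3,5), (1,3,6), (1,3,7), (1,4,5), (1,4,6), (1,4,7), (1,5,6), (1,5,7), (1,6,7), (2,2,3), (2,2,4), (2,2,5), (2,2,6), (2,2,7), (2,3,4), (2,3,5), (2,3,6), (2,3,7), (2,4,5), (2,4,6), (2,4,7), (2,5,6), (2,5,7), (2,6,7), (3,3,4), (3,3,5), (3,3,6), (3,3,7), (3,4,5), (3,4,6), (3,4,7), (3,5,6), (3,5,7), (3,6,7), (4,4,5), (4,4,6), (4,4,7), (4,5,6), (4,5,7), (4,6,7), (5,5,6), (5,5,7), (5,6,7), (6,6,7)]"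

lemma valid_L7: "valid_bc 7 bc \<Longrightarrow> bc \<in> set L7"
proof -
  obtain a b c where bc: "bc = (a,b,c)" by (cases bc)
  assume "valid_bc 7 bc"
  then have h: "1 \<le> a" "a \<le> b" "b < c" "c \<le> 7" by (auto simp: valid_bc_def bc)
  have "a = 1 \<or> a = 2 \<or> a = 3 \<or> a = 4 \<or> a = 5 \<or> a = 6" using h by linarith
  moreover have "b = 1 \<or> b = 2 \<or> b = 3 \<or> b = 4 \<or> b = 5 \<or> b = 6" using h by linarith
  moreover have "c = 2 \<or> c = 3 \<or> c = 4 \<or> c = 5 \<or> c = 6 \<or> c = 7" using h by linarith
  ultimately show ?thesis using h unfolding bc L7_def
    by (elim disjE; simp)
qed

definition X1 :: "nat list list" where
  "X1 = [[1, 3, 2, 4, 5, 6, 7], [1, 3, 4, 2, 5, 6, 7], [1, 3, 4, 5, 2, 6, 7], [1, 3, 4, 5, 6, 2, 7], [1, 3, 4, 5, 6, 7, 2], [2, 1, 3, 4, 5, 6, 7], [2, 3, 1, 4, 5, 6, 7], [3, 1, 2, 4, 5, 6, 7]]"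

lemma cA: "chkA L7"
  by (simp add: L7_def apply_bc_def p0s_def)

lemma cB: "\<forall>x1\<in>set X1. chkB x1 L7 \<and> \<not> adjl x1 3 7"
  by (simp add: X1_def L7_def apply_bc_def)

lemma chkA_sound: "chkA L \<Longrightarrow> bc \<in> set L \<Longrightarrow> adjl (apply_bc bc p0s) 1 3 \<Longrightarrow> apply_bc bc p0s \<in> set X1"
  by (induction L) (auto simp: Let_def X1_def)

lemma chkB_sound: "chkB x1 L \<Longrightarrow> bc \<in> set L \<Longrightarrow> adjl (apply_bc bc x1) 3 7 \<Longrightarrow> adjl (apply_bc bc x1) 4 6 \<Longrightarrow> False"
  by (induction L) (auto simp: Let_def)

lemma len_le1: "length B < 2 \<Longrightarrow> B = [] \<or> (\<exists>bc. B = [bc])"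
  by (cases B) auto

definition Sol0 :: "block_crossing list list" where
  "Sol0 = [[(3,4,7),(1,4,6)],[],[]]"

definition Ms :: "nat set list" where "Ms = [{1,3},{3,7},{4,6}]"

lemma Sol0_sol: "is_solution 7 Ms p0s Sol0"
proof -
  have e1: "perm_after p0s Sol0 1 = [7,3,1,2,5,6,4]"
    by (simp add: perm_after_def apply_bcs_def apply_bc_def p0s_def Sol0_def)
  have e2: "perm_after p0s Sol0 2 = [7,3,1,2,5,6,4]"
    by (simp add: perm_after_def apply_bcs_def apply_bc_def p0s_def Sol0_def)
  have e3: "perm_after p0s Sol0 3 = [7,3,1,2,5,6,4]"
    by (simp add: perm_after_def apply_bcs_def apply_bc_def p0s_def Sol0_def)
  have s1: "supports [7,3,1,2,5,6,4] {1,3}"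
    unfolding supports_def by (rule exI[of _ 1], rule exI[of _ 3]) auto
  have s2: "supports [7,3,1,2,5,6,4] {3,7}"
    unfolding supports_def by (rule exI[of _ 0], rule exI[of _ 2]) auto
  have s3: "supports [7,3,1,2,5,6,4] {4,6}"
    unfolding supports_def by (rule exI[of _ 5], rule exI[of _ 7]) auto
  have "\<forall>i < length Ms. supports (perm_after p0s Sol0 (Suc i)) (Ms ! i)"
  proof (intro allI impI)
    fix i assume "i < length Ms"
    then have "i = 0 \<or> i = 1 \<or> i = 2" by (simp add: Ms_def) linarith
    then show "supports (perm_after p0s Sol0 (Suc i)) (Ms ! i)"
      using e1 e2 e3 s1 s2 s3 by (auto simp: Ms_def numeral_2_eq_2 numeral_3_eq_3)
  qed
  moreover have "is_perm 7 p0s" by (auto simp: is_perm_def p0s_def)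
  moreover have "\<forall>B\<in>set Sol0. \<forall>bc\<in>set B. valid_bc 7 bc" by (simp add: Sol0_def valid_bc_def)
  ultimately show ?thesis by (simp add: is_solution_def Sol0_def Ms_def)
qed

lemma perm_after3:
  "perm_after p [B1,B2,B3] 1 = apply_bcs B1 p"
  "perm_after p [B1,B2,B3] 2 = apply_bcs B2 (apply_bcs B1 p)"
  "perm_after p [B1,B2,B3] 3 = apply_bcs B3 (apply_bcs B2 (apply_bcs B1 p))"
  by (simp_all add: perm_after_def numeral_2_eq_2 numeral_3_eq_3)

lemma main_part:
  assumes H: "is_solution 7 Ms p0s Bs \<and> (\<forall>Bs'. is_solution 7 Ms p0s Bs' \<longrightarrow> cost Bs \<le> cost Bs')"
  shows "\<exists>i < length Bs. 2 \<le> length (Bs ! i)"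
proof -
  from H have sol: "is_solution 7 Ms p0s Bs" and c2: "cost Bs \<le> 2"
    using Sol0_sol by (auto simp: cost_def Sol0_def)
  show "\<exists>i < length Bs. 2 \<le> length (Bs ! i)"
  proof (rule ccontr)
    assume "\<not> ?thesis"
    then have short: "\<forall>i < length Bs. length (Bs ! i) < 2" by auto
    have "length Bs = 3" using sol by (simp add: is_solution_def Ms_def)
    then obtain B1 B2 B3 where Bs: "Bs = [B1,B2,B3]"
      by (auto simp: numeral_3_eq_3 length_Suc_conv)
    have vals: "\<forall>B\<in>set Bs. \<forall>bc\<in>set B. valid_bc 7 bc" using sol by (simp add: is_solution_def)
    have sup: "\<forall>i < 3. supports (perm_after p0s Bs (Suc i)) (Ms ! i)"
      using sol by (simp add: is_solution_def Ms_def)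
    let ?y1 = "apply_bcs B1 p0s"
    let ?y2 = "apply_bcs B2 ?y1"
    let ?y3 = "apply_bcs B3 ?y2"
    have a1: "adjl ?y1 1 3"
      using sup[rule_format, of 0] by (intro supports_adjl) (auto simp: Bs perm_after_def Ms_def)
    have a2: "adjl ?y2 3 7"
      using sup[rule_format, of 1] by (intro supports_adjl) (auto simp: Bs perm_after_def Ms_def numeral_2_eq_2)
    have a3: "adjl ?y3 4 6"
      using sup[rule_format, of 2] by (intro supports_adjl) (auto simp: Bs perm_after_def Ms_def numeral_2_eq_2 numeral_3_eq_3)
    have "B1 = [] \<or> (\<exists>bc. B1 = [bc])" using short[rule_format, of 0] by (intro len_le1) (simp add: Bs)
    moreover have "B1 \<noteq> []" using a1 by (auto simp: apply_bcs_def p0s_def)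
    ultimately obtain bc1 where b1: "B1 = [bc1]" by auto
    have "valid_bc 7 bc1" using vals by (simp add: Bs b1)
    then have "bc1 \<in> set L7" by (rule valid_L7)
    then have y1X: "?y1 \<in> set X1" using a1 chkA_sound[OF cA] by (simp add: b1 apply_bcs_def)
    then have cb: "chkB ?y1 L7" "\<not> adjl ?y1 3 7" using cB by auto
    have "B2 = [] \<or> (\<exists>bc. B2 = [bc])" using short[rule_format, of 1] by (intro len_le1) (simp add: Bs)
    moreover have "B2 \<noteq> []" using a2 cb(2) by (auto simp: apply_bcs_def)
    ultimately obtain bc2 where b2: "B2 = [bc2]" by auto
    have "B3 = []" using c2 by (simp add: cost_def Bs b1 b2)
    have "valid_bc 7 bc2" using vals by (simp add: Bs b2)
    then have "bc2 \<in> set L7" by (rule valid_L7)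
    then show False using chkB_sound[OF cb(1)] a2 a3 \<open>B3 = []\<close> by (simp add: b2 apply_bcs_def)
  qed
qed

theorem proposition1:
  shows "\<exists>k M p0. is_2sbcm k M \<and> is_perm k p0 \<and>
     (\<forall>Bs. is_solution k M p0 Bs \<and>
           (\<forall>Bs'. is_solution k M p0 Bs' \<longrightarrow> cost Bs \<le> cost Bs') \<longrightarrow>
           (\<exists>i < length Bs. 2 \<le> length (Bs ! i)))"
proof -
  have "is_2sbcm 7 Ms" by (simp add: is_2sbcm_def Ms_def)
  moreover have "is_perm 7 p0s" by (auto simp: is_perm_def p0s_def)
  ultimately show ?thesis using main_part by blast
qed

end
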